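(* Let $0<\eta<1/2$, $0\le\delta<1/2$, and let $p_0>p_1>p_2\ge\ldots\ge p_N$ be reals in $[\eta,1-\eta]$ with $p_0-p_1=p_1-p_2$; set $\Delta_i=p_0-p_i$ and define $\mathbf{p}^0,\ldots,\mathbf{p}^N\in[0,1]^N$ by $\mathbf{p}^0_i=p_i$, and for $j\ge1$, $\mathbf{p}^j_i=p_i$ ($i\ne j$), $\mathbf{p}^j_j=p_0$. Fix a density matrix $\rho$ on $\mathcal{H}_A\otimes\mathcal{H}_R$. Suppose we are given $m$ copies of the state $\mathcal{E}(\rho)$, where it is known that $\mathcal{E}=\mathcal{E}^{\mathbf{p}^k}$ for some unknown $k\in\{0,\ldots,N\}$, and that a measurement on these copies identifies the best arm of $\mathbf{p}^k$ (arm $1$ if $k=0$, arm $k$ if $k\ge1$) with probability at least $1-\delta$ for every $k$. Then $$m\geq\frac{\eta(1-\eta)(1-2\sqrt{\delta(1-\delta)})}{16}H(\mathbf{p}^0).$$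
   Context: $\mathcal{H}_A$ has orthonormal basis $\ket{1},\ldots,\ket{N}$, $\mathcal{H}_R$ is a qubit. For $x\in\{0,1\}^N$, $O_x$ is the unitary with $O_x\ket{i}\ket{c}=\ket{i}\ket{c+x_i\bmod2}$, and for $\mathbf{p}\in[0,1]^N$, $\mathcal{E}^{\mathbf{p}}(\rho)=\sum_{x}\prod_i\mathbf{p}_i^{x_i}(1-\mathbf{p}_i)^{1-x_i}O_x\rho O_x^\dagger$. For $\mathbf{q}$ with unique largest entry $q_{i^*}$, $H(\mathbf{q})=\sum_{i\ne i^*}(q_{i^*}-q_i)^{-2}$; thus $H(\mathbf{p}^0)=\sum_{i=2}^N(p_1-p_i)^{-2}$. *)

theory Defs
  imports Complex_Main "HOL-Library.FuncSet"
begin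

text \<open>Finite-dimensional operators are represented as kernels (matrices)
  indexed by an explicit finite index set S: A x y is the matrix entry.\<close>

type_synonym 'a op = "'a \<Rightarrow> 'a \<Rightarrow> complex"

definition mmult :: "'a set \<Rightarrow> 'a op \<Rightarrow> 'a op \<Rightarrow> 'a op" where
  "mmult S A B = (\<lambda>x y. \<Sum>z\<in>S. A x z * B z y)"

definition adj :: "'a op \<Rightarrow> 'a op" where
  "adj A = (\<lambda>x y. cnj (A y x))"

definition tr :: "'a set \<Rightarrow> 'a op \<Rightarrow> complex" where
  "tr S A = (\<Sum>x\<in>S. A x x)"

definition psd :: "'a set \<Rightarrow> 'a op \<Rightarrow> bool" where
  "psd S A \<longleftrightarrow> (\<forall>v::'a \<Rightarrow> complex.
      Im (\<Sum>x\<in>S. \<Sum>y\<in>S. cnj (v x) * A x y * v y) = 0 \<and>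
      Re (\<Sum>x\<in>S. \<Sum>y\<in>S. cnj (v x) * A x y * v y) \<ge> 0)"

definition density :: "'a set \<Rightarrow> 'a op \<Rightarrow> bool" where
  "density S \<rho> \<longleftrightarrow> psd S \<rho> \<and> tr S \<rho> = 1"

text \<open>Basis of H_A \<otimes> H_R: pairs (i,c), i \<in> {1..N}, c a bit (bool).\<close>
definition basisAR :: "nat \<Rightarrow> (nat \<times> bool) set" where
  "basisAR N = {1..N} \<times> UNIV"

text \<open>Oracle O_x |i,c> = |i, c xor x_i>, as a matrix.\<close>
definition Omat :: "(nat \<Rightarrow> bool) \<Rightarrow> (nat \<times> bool) op" where
  "Omat x = (\<lambda>(i,c) (i',c'). if i = i' \<and> c = (c' \<noteq> x i') then 1 else 0)"

definition bitstrings :: "nat \<Rightarrow> (nat \<Rightarrow> bool) set" where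
  "bitstrings N = PiE {1..N} (\<lambda>_. UNIV)"

definition chan :: "nat \<Rightarrow> (nat \<Rightarrow> real) \<Rightarrow> (nat \<times> bool) op \<Rightarrow> (nat \<times> bool) op" where
  "chan N q \<rho> = (\<lambda>a b. \<Sum>x\<in>bitstrings N.
      complex_of_real (\<Prod>i\<in>{1..N}. if x i then q i else 1 - q i) *
      mmult (basisAR N) (mmult (basisAR N) (Omat x) \<rho>) (adj (Omat x)) a b)"

text \<open>m-fold tensor power: index set = lists of length m of basis elements.\<close>
definition tensor_basis :: "'a set \<Rightarrow> nat \<Rightarrow> 'a list set" where
  "tensor_basis S m = {xs. length xs = m \<and> set xs \<subseteq> S}"

definition tpow :: "nat \<Rightarrow> 'a op \<Rightarrow> 'a list op" where
  "tpow m \<sigma> = (\<lambda>xs ys. \<Prod>k<m. \<sigma> (xs ! k) (ys ! k))"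

definition povm :: "'a set \<Rightarrow> 'o set \<Rightarrow> ('o \<Rightarrow> 'a op) \<Rightarrow> bool" where
  "povm S Out M \<longleftrightarrow> finite Out \<and> (\<forall>a\<in>Out. psd S (M a)) \<and>
     (\<forall>x\<in>S. \<forall>y\<in>S. (\<Sum>a\<in>Out. M a x y) = (if x = y then 1 else 0))"

definition best_arm :: "nat \<Rightarrow> (nat \<Rightarrow> real) \<Rightarrow> nat" where
  "best_arm N q = (THE i. i \<in> {1..N} \<and> (\<forall>j\<in>{1..N}. j \<noteq> i \<longrightarrow> q j < q i))"

definition hardness :: "nat \<Rightarrow> (nat \<Rightarrow> real) \<Rightarrow> real" where
  "hardness N q = (\<Sum>i\<in>{1..N} - {best_arm N q}. 1 / (q (best_arm N q) - q i)^2)"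

definition pvec :: "(nat \<Rightarrow> real) \<Rightarrow> nat \<Rightarrow> nat \<Rightarrow> real" where
  "pvec p j = (\<lambda>i. if j \<ge> 1 \<and> i = j then p 0 else p i)"

end

theory Submission
  imports Defs
begin


definition form :: "'a set \<Rightarrow> 'a op \<Rightarrow> ('a \<Rightarrow> complex) \<Rightarrow> ('a \<Rightarrow> complex) \<Rightarrow> complex" where
  "form S A u w = (\<Sum>x\<in>S. \<Sum>y\<in>S. cnj (u x) * A x y * w y)"

lemma psd_form: "psd S A \<longleftrightarrow> (\<forall>v. Im (form S A v v) = 0 \<and> Re (form S A v v) \<ge> 0)"
  unfolding psd_def form_def by simp

lemma psdD:
  assumes "psd S A"
  shows "Im (form S A v v) = 0" "Re (form S A v v) \<ge> 0"
  using assms unfolding psd_form by auto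

lemma psd_subset:
  assumes "psd S A" "S' \<subseteq> S" "finite S"
  shows "psd S' A"
  unfolding psd_form
proof
  fix v
  define v' where "v' = (\<lambda>x. if x \<in> S' then v x else (0::complex))"
  have "form S A v' v' = form S' A v v"
  proof -
    have "form S A v' v' = (\<Sum>x\<in>S. \<Sum>y\<in>S. if x \<in> S' \<and> y \<in> S' then cnj (v x) * A x y * v y else 0)"
      unfolding form_def v'_def by (intro sum.cong refl) auto
    also have "\<dots> = (\<Sum>x\<in>S. if x \<in> S' then (\<Sum>y\<in>S'. cnj (v x) * A x y * v y) else 0)"
      using assms by (intro sum.cong refl) (auto simp: sum.inter_restrict[symmetric] Int_absorb1 if_distrib cong: if_cong)
    also have "\<dots> = form S' A v v"
      unfolding form_def using assms by (simp add: sum.inter_restrict[symmetric] Int_absorb1)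
    finally show ?thesis .
  qed
  then show "Im (form S' A v v) = 0 \<and> 0 \<le> Re (form S' A v v)"
    using psdD[OF assms(1), of v'] by simp
qed

lemma psd_diag:
  assumes "psd S A" "finite S" "x \<in> S"
  shows "Im (A x x) = 0" "Re (A x x) \<ge> 0"
proof -
  have "psd {x} A" by (rule psd_subset[OF assms(1) _ assms(2)]) (use assms in auto)
  then have "Im (form {x} A (\<lambda>_. 1) (\<lambda>_. 1)) = 0 \<and> Re (form {x} A (\<lambda>_. 1) (\<lambda>_. 1)) \<ge> 0"
    using psdD[of "{x}" A "\<lambda>_. 1"] by simp
  then show "Im (A x x) = 0" "Re (A x x) \<ge> 0" by (auto simp: form_def)
qed


lemma psd_herm:
  assumes "psd S A" "finite S" "x \<in> S" "y \<in> S"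
  shows "A y x = cnj (A x y)"
proof (cases "x = y")
  case True
  then show ?thesis using psd_diag[OF assms(1,2,3)] by (simp add: complex_eq_iff)
next
  case False
  have p2: "psd {x,y} A" by (rule psd_subset[OF assms(1) _ assms(2)]) (use assms in auto)
  have p1: "psd {x} A" by (rule psd_subset[OF assms(1) _ assms(2)]) (use assms in auto)
  have p1': "psd {y} A" by (rule psd_subset[OF assms(1) _ assms(2)]) (use assms in auto)
  have h1: "Im (form {x,y} A (\<lambda>_. 1) (\<lambda>_. 1)) = 0" using psdD(1)[OF p2] .
  have h2: "Im (form {x,y} A (\<lambda>z. if z = y then \<i> else 1) (\<lambda>z. if z = y then \<i> else 1)) = 0"
    using psdD(1)[OF p2] .
  have h3: "Im (form {x} A (\<lambda>_. 1) (\<lambda>_. 1)) = 0" using psdD(1)[OF p1] .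
  have h4: "Im (form {y} A (\<lambda>_. 1) (\<lambda>_. 1)) = 0" using psdD(1)[OF p1'] .
  have e1: "Im (A x y) + Im (A y x) = 0" using h1 h3 h4 False by (simp add: form_def)
  have e2: "Re (A x y) - Re (A y x) = 0" using h2 h3 h4 False by (simp add: form_def)
  show ?thesis using e1 e2 by (simp add: complex_eq_iff)
qed



lemma form_herm:
  assumes "\<And>x y. x \<in> S \<Longrightarrow> y \<in> S \<Longrightarrow> A y x = cnj (A x y)"
  shows "form S A u w = cnj (form S A w u)"
proof -
  have "cnj (form S A w u) = (\<Sum>x\<in>S. \<Sum>y\<in>S. w x * cnj (A x y) * cnj (u y))"
    by (simp add: form_def)
  also have "\<dots> = (\<Sum>x\<in>S. \<Sum>y\<in>S. w x * A y x * cnj (u y))"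
  proof (intro sum.cong refl)
    fix x y assume "x \<in> S" "y \<in> S"
    then have "A y x = cnj (A x y)" by (rule assms)
    then show "w x * cnj (A x y) * cnj (u y) = w x * A y x * cnj (u y)" by simp
  qed
  also have "\<dots> = (\<Sum>y\<in>S. \<Sum>x\<in>S. w x * A y x * cnj (u y))"
    by (rule sum.swap)
  also have "\<dots> = form S A u w"
    unfolding form_def by (intro sum.cong refl) (simp add: mult.commute mult.left_commute)
  finally show ?thesis by simp
qed


lemma form_add_left: "form S E (\<lambda>x. u x + v x) w = form S E u w + form S E v w"
  unfolding form_def by (simp add: ring_distribs sum.distrib)

lemma form_add_right: "form S E w (\<lambda>x. u x + v x) = form S E w u + form S E w v"
  unfolding form_def by (simp add: ring_distribs sum.distrib)

lemma form_scale_left: "form S E (\<lambda>x. c * u x) w = cnj c * form S E u w"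
  unfolding form_def by (simp add: sum_distrib_left mult_ac)

lemma form_scale_right: "form S E w (\<lambda>x. c * u x) = c * form S E w u"
  unfolding form_def by (simp add: sum_distrib_left mult_ac)

lemma discr_le:
  fixes a b c :: real
  assumes "\<And>t. 0 \<le> a + 2 * t * c + t\<^sup>2 * b" "a \<ge> 0" "b \<ge> 0"
  shows "c \<le> sqrt a * sqrt b"
proof (cases "b = 0")
  case True
  show ?thesis
  proof (rule ccontr)
    assume "\<not> ?thesis"
    then have "c > 0" using True by simp
    have "0 \<le> a + 2 * (-(a+1)/(2*c)) * c + (-(a+1)/(2*c))\<^sup>2 * b" by (rule assms(1))
    then show False using True \<open>c > 0\<close> by (simp add: field_simps)
  qed
next
  case False
  then have "b > 0" using assms by simp
  have "0 \<le> a + 2 * (-c/b) * c + (-c/b)\<^sup>2 * b" by (rule assms(1))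
  then have "0 \<le> a - c\<^sup>2 / b" using \<open>b > 0\<close> by (simp add: field_simps power2_eq_square)
  then have "c\<^sup>2 \<le> a * b" using \<open>b > 0\<close> by (simp add: field_simps)
  then have "sqrt (c\<^sup>2) \<le> sqrt (a * b)" by (rule real_sqrt_le_mono)
  then show ?thesis by (simp add: real_sqrt_mult)
qed

lemma form_cs:
  assumes "psd T E" "finite T"
  shows "Re (\<Sum>l\<in>L. form T E (B l) (A l)) \<le>
     sqrt (Re (\<Sum>l\<in>L. form T E (A l) (A l))) * sqrt (Re (\<Sum>l\<in>L. form T E (B l) (B l)))"
proof (rule discr_le)
  have herm: "\<And>x y. x \<in> T \<Longrightarrow> y \<in> T \<Longrightarrow> E y x = cnj (E x y)"
    using psd_herm[OF assms] by blast
  show "0 \<le> Re (\<Sum>l\<in>L. form T E (A l) (A l))"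
    by (simp add: psdD[OF assms(1)] sum_nonneg)
  show "0 \<le> Re (\<Sum>l\<in>L. form T E (B l) (B l))"
    by (simp add: psdD[OF assms(1)] sum_nonneg)
  fix t :: real
  have "0 \<le> Re (\<Sum>l\<in>L. form T E (\<lambda>x. A l x + of_real t * B l x) (\<lambda>x. A l x + of_real t * B l x))"
    by (simp add: psdD[OF assms(1)] sum_nonneg)
  also have "\<dots> = Re (\<Sum>l\<in>L. form T E (A l) (A l) + of_real t * form T E (A l) (B l)
       + of_real t * form T E (B l) (A l) + of_real (t\<^sup>2) * form T E (B l) (B l))"
    by (simp add: form_add_left form_add_right form_scale_left form_scale_right
        algebra_simps power2_eq_square)
  also have "\<dots> = Re (\<Sum>l\<in>L. form T E (A l) (A l)) + 2 * t * Re (\<Sum>l\<in>L. form T E (B l) (A l))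
       + t\<^sup>2 * Re (\<Sum>l\<in>L. form T E (B l) (B l))"
  proof -
    have "\<And>l. Re (form T E (A l) (B l)) = Re (form T E (B l) (A l))"
    proof -
      fix l
      have "form T E (A l) (B l) = cnj (form T E (B l) (A l))" by (rule form_herm[OF herm])
      then show "Re (form T E (A l) (B l)) = Re (form T E (B l) (A l))" by simp
    qed
    then show ?thesis by (simp add: sum.distrib Re_sum sum_distrib_left algebra_simps)
  qed
  finally show "0 \<le> Re (\<Sum>l\<in>L. form T E (A l) (A l)) + 2 * t * Re (\<Sum>l\<in>L. form T E (B l) (A l))
       + t\<^sup>2 * Re (\<Sum>l\<in>L. form T E (B l) (B l))" .
qed


lemma mult_cnj_norm: "z * cnj z = of_real ((cmod z)\<^sup>2)"
  by (rule complex_norm_square[symmetric])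

lemma cnj_mult_norm: "cnj z * z = of_real ((cmod z)\<^sup>2)"
  by (simp add: mult.commute mult_cnj_norm del: of_real_power)

lemma form_es:
  assumes "finite S" "s \<in> S"
  shows "form S A (\<lambda>z. if z = s then 1 else 0) w = (\<Sum>y\<in>S. A s y * w y)"
proof -
  have "form S A (\<lambda>z. if z = s then 1 else 0) w =
        (\<Sum>x\<in>S. if x = s then (\<Sum>y\<in>S. A x y * w y) else 0)"
    unfolding form_def by (intro sum.cong refl) auto
  also have "\<dots> = (\<Sum>y\<in>S. A s y * w y)" using assms by simp
  finally show ?thesis .
qed

lemma form_cs1:
  assumes "psd T E" "finite T"
  shows "Re (form T E w v) \<le> sqrt (Re (form T E v v)) * sqrt (Re (form T E w w))"
  using form_cs[OF assms, where L="{()}" and A="\<lambda>_. v" and B="\<lambda>_. w"] by simp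

lemma psd_rank1_step:
  assumes "finite S" "psd S A" "s \<in> S"
  shows "\<exists>u. psd S (\<lambda>x y. A x y - u x * cnj (u y)) \<and>
     (\<forall>y\<in>S. A s y - u s * cnj (u y) = 0) \<and> (\<forall>x\<in>S. A x s - u x * cnj (u s) = 0)"
proof -
  define d where "d = Re (A s s)"
  have Ass: "A s s = of_real d" using psd_diag[OF assms(2,1,3)] unfolding d_def by (simp add: complex_eq_iff)
  have d0: "d \<ge> 0" using psd_diag[OF assms(2,1,3)] unfolding d_def by simp
  have herm: "\<And>x y. x \<in> S \<Longrightarrow> y \<in> S \<Longrightarrow> A y x = cnj (A x y)"
    using psd_herm[OF assms(2,1)] by blast
  define es where "es = (\<lambda>z. if z = s then 1 else (0::complex))"
  have fes: "\<And>w. form S A es w = (\<Sum>y\<in>S. A s y * w y)" unfolding es_def by (rule form_es[OF assms(1,3)])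
  have fees: "form S A es es = of_real d" using fes[of es] assms by (simp add: es_def Ass if_distrib cong: if_cong)
  show ?thesis
  proof (cases "d = 0")
    case True
    define w where "w = (\<lambda>z. cnj (A s z))"
    have "Re (form S A es w) \<le> sqrt (Re (form S A w w)) * sqrt (Re (form S A es es))"
      by (rule form_cs1[OF assms(2,1)])
    also have "\<dots> = 0" using fees True by simp
    finally have "Re (\<Sum>y\<in>S. A s y * cnj (A s y)) \<le> 0" using fes[of w] by (simp add: w_def)
    then have "(\<Sum>y\<in>S. (cmod (A s y))\<^sup>2) \<le> 0"
      by (simp add: complex_mult_cnj Re_sum cmod_power2 del: of_real_power)
    then have z: "\<forall>y\<in>S. (cmod (A s y))\<^sup>2 = 0"
      using sum_nonneg_eq_0_iff[OF assms(1), of "\<lambda>y. (cmod (A s y))\<^sup>2"] by (simp add: order_antisym sum_nonneg)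
    then have z1: "\<forall>y\<in>S. A s y = 0" by simp
    have z2: "\<forall>x\<in>S. A x s = 0"
    proof
      fix x assume "x \<in> S"
      then have "A x s = cnj (A s x)" using herm[of s x] assms(3) by blast
      then show "A x s = 0" using z1 \<open>x \<in> S\<close> by simp
    qed
    show ?thesis
      by (rule exI[of _ "\<lambda>_. 0"]) (use assms(2) z1 z2 in simp)
  next
    case False
    then have dpos: "d > 0" using d0 by simp
    define u where "u = (\<lambda>x. A x s / of_real (sqrt d))"
    have us: "u s = of_real (sqrt d)" using dpos
      by (simp add: u_def Ass field_simps flip: of_real_mult)
    have r1: "\<forall>y\<in>S. A s y - u s * cnj (u y) = 0"
    proof
      fix y assume "y \<in> S"
      then have "A s y = cnj (A y s)" using herm[of y s] assms(3) by blast
      have "u s * cnj (u y) = of_real (sqrt d) * (cnj (A y s) / of_real (sqrt d))"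
        unfolding us by (simp add: u_def)
      then show "A s y - u s * cnj (u y) = 0" using dpos \<open>A s y = cnj (A y s)\<close> by simp
    qed
    have r2: "\<forall>x\<in>S. A x s - u x * cnj (u s) = 0"
      using dpos unfolding us by (simp add: u_def)
    have "psd S (\<lambda>x y. A x y - u x * cnj (u y))"
      unfolding psd_form
    proof
      fix v
      define g where "g = (\<Sum>y\<in>S. cnj (u y) * v y)"
      have fsub: "form S (\<lambda>x y. A x y - u x * cnj (u y)) v v = form S A v v - cnj g * g"
      proof -
        have "form S (\<lambda>x y. A x y - u x * cnj (u y)) v v =
              form S A v v - (\<Sum>x\<in>S. \<Sum>y\<in>S. (cnj (v x) * u x) * (cnj (u y) * v y))"
          unfolding form_def by (simp add: algebra_simps sum_subtractf)
        also have "(\<Sum>x\<in>S. \<Sum>y\<in>S. (cnj (v x) * u x) * (cnj (u y) * v y)) = cnj g * g"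
        proof -
          have "cnj g * g = (\<Sum>x\<in>S. cnj (v x) * u x) * (\<Sum>y\<in>S. cnj (u y) * v y)"
            by (simp add: g_def mult.commute)
          also have "\<dots> = (\<Sum>x\<in>S. \<Sum>y\<in>S. (cnj (v x) * u x) * (cnj (u y) * v y))"
            by (rule sum_product)
          finally show ?thesis by simp
        qed
        finally show ?thesis .
      qed
      define h where "h = form S A es v"
      have hg: "h = of_real (sqrt d) * g"
      proof -
        have "h = (\<Sum>y\<in>S. A s y * v y)" unfolding h_def by (rule fes)
        also have "\<dots> = (\<Sum>y\<in>S. of_real (sqrt d) * (cnj (u y) * v y))"
        proof (intro sum.cong refl)
          fix y assume "y \<in> S"
          then have "A s y = cnj (A y s)" using herm[of y s] assms(3) by blast
          then show "A s y * v y = of_real (sqrt d) * (cnj (u y) * v y)"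
            using dpos by (simp add: u_def)
        qed
        finally show ?thesis unfolding g_def by (simp add: sum_distrib_left)
      qed
      have key: "(cmod h)\<^sup>2 \<le> d * Re (form S A v v)"
      proof (cases "h = 0")
        case True then show ?thesis using d0 psdD[OF assms(2), of v] by simp
      next
        case False
        have "Re (form S A es (\<lambda>x. cnj h * v x)) \<le>
              sqrt (Re (form S A (\<lambda>x. cnj h * v x) (\<lambda>x. cnj h * v x))) * sqrt (Re (form S A es es))"
          by (rule form_cs1[OF assms(2,1)])
        moreover have "form S A es (\<lambda>x. cnj h * v x) = of_real ((cmod h)\<^sup>2)"
          by (simp add: form_scale_right h_def[symmetric] cnj_mult_norm del: of_real_power)
        moreover have "form S A (\<lambda>x. cnj h * v x) (\<lambda>x. cnj h * v x) = of_real ((cmod h)\<^sup>2) * form S A v v"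
          by (simp add: form_scale_right form_scale_left cnj_mult_norm mult.assoc[symmetric] del: of_real_power)
        ultimately have "(cmod h)\<^sup>2 \<le> sqrt ((cmod h)\<^sup>2 * Re (form S A v v)) * sqrt d"
          using fees by simp
        then have "(cmod h)\<^sup>2 \<le> cmod h * sqrt (Re (form S A v v) * d)"
          by (simp add: real_sqrt_mult)
        then have "cmod h \<le> sqrt (Re (form S A v v) * d)"
          using False by (simp add: power2_eq_square)
        then have "(cmod h)\<^sup>2 \<le> (sqrt (Re (form S A v v) * d))\<^sup>2"
          by (simp add: power_mono)
        then show ?thesis using d0 psdD[OF assms(2), of v] by (simp add: mult.commute)
      qed
      have "(cmod h)\<^sup>2 = d * (cmod g)\<^sup>2" using hg d0 by (simp add: norm_mult power_mult_distrib)
      then have "(cmod g)\<^sup>2 \<le> Re (form S A v v)" using key dpos by simp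
      moreover have "cnj g * g = of_real ((cmod g)\<^sup>2)" by (rule cnj_mult_norm)
      ultimately show "Im (form S (\<lambda>x y. A x y - u x * cnj (u y)) v v) = 0 \<and>
           0 \<le> Re (form S (\<lambda>x y. A x y - u x * cnj (u y)) v v)"
        using fsub psdD[OF assms(2), of v] by simp
    qed
    then show ?thesis using r1 r2 by blast
  qed
qed


lemma psd_decomp:
  assumes "finite S" "psd S A"
  shows "\<exists>V. \<forall>x\<in>S. \<forall>y\<in>S. A x y = (\<Sum>r\<in>S. V r x * cnj (V r y))"
  using assms
proof (induction S arbitrary: A rule: finite_induct)
  case empty
  then show ?case by simp
next
  case (insert s F)
  obtain u where u1: "psd (insert s F) (\<lambda>x y. A x y - u x * cnj (u y))"
    and u2: "\<forall>y\<in>insert s F. A s y - u s * cnj (u y) = 0"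
    and u3: "\<forall>x\<in>insert s F. A x s - u x * cnj (u s) = 0"
    using psd_rank1_step[OF _ insert.prems] insert.hyps by blast
  have "psd F (\<lambda>x y. A x y - u x * cnj (u y))"
    by (rule psd_subset[OF u1]) (use insert.hyps in auto)
  then obtain V' where V': "\<forall>x\<in>F. \<forall>y\<in>F. A x y - u x * cnj (u y) = (\<Sum>r\<in>F. V' r x * cnj (V' r y))"
    using insert.IH by blast
  define V where "V = (\<lambda>r x. if r = s then u x else if x = s then 0 else V' r x)"
  show ?case
  proof (rule exI[of _ V], intro ballI)
    fix x y assume xy: "x \<in> insert s F" "y \<in> insert s F"
    have "(\<Sum>r\<in>insert s F. V r x * cnj (V r y)) = u x * cnj (u y) + (\<Sum>r\<in>F. V r x * cnj (V r y))"
      using insert.hyps by (simp add: V_def)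
    also have "(\<Sum>r\<in>F. V r x * cnj (V r y)) =
        (\<Sum>r\<in>F. if x = s \<or> y = s then 0 else V' r x * cnj (V' r y))"
      using insert.hyps by (intro sum.cong refl) (auto simp: V_def)
    also have "u x * cnj (u y) + \<dots> = A x y"
    proof (cases "x = s \<or> y = s")
      case True
      then show ?thesis using u2 u3 xy by auto
    next
      case False
      then have "x \<in> F" "y \<in> F" using xy by auto
      then have "A x y - u x * cnj (u y) = (\<Sum>r\<in>F. V' r x * cnj (V' r y))" using V' by blast
      then show ?thesis using False by (simp add: algebra_simps)
    qed
    finally show "A x y = (\<Sum>r\<in>insert s F. V r x * cnj (V r y))" by simp
  qed
qed



lemma finite_tb: "finite K \<Longrightarrow> finite (tensor_basis K m)"
  unfolding tensor_basis_def using finite_lists_length_eq[of K m] by (simp add: conj_commute)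

lemma tb_Suc: "tensor_basis K (Suc m) = (\<lambda>(k,ks). k # ks) ` (K \<times> tensor_basis K m)"
  unfolding tensor_basis_def by (auto simp: length_Suc_conv image_iff)

lemma tb_nth: "xs \<in> tensor_basis K m \<Longrightarrow> t < m \<Longrightarrow> xs ! t \<in> K"
  unfolding tensor_basis_def by auto

lemma prod_sum_lists:
  fixes h :: "nat \<Rightarrow> 'k \<Rightarrow> 'c::comm_semiring_1"
  assumes "finite K"
  shows "(\<Prod>t<m. \<Sum>k\<in>K. h t k) = (\<Sum>ks\<in>tensor_basis K m. \<Prod>t<m. h t (ks!t))"
proof (induction m arbitrary: h)
  case 0
  have "tensor_basis K 0 = {[]}" by (auto simp: tensor_basis_def)
  then show ?case by simp
next
  case (Suc m)
  have "(\<Prod>t<Suc m. \<Sum>k\<in>K. h t k) = (\<Sum>k\<in>K. h 0 k) * (\<Prod>t<m. \<Sum>k\<in>K. h (Suc t) k)"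
    by (rule prod.lessThan_Suc_shift)
  also have "\<dots> = (\<Sum>k\<in>K. h 0 k) * (\<Sum>ks\<in>tensor_basis K m. \<Prod>t<m. h (Suc t) (ks!t))"
    by (simp add: Suc.IH)
  also have "\<dots> = (\<Sum>(k,ks)\<in>K \<times> tensor_basis K m. h 0 k * (\<Prod>t<m. h (Suc t) (ks!t)))"
    unfolding sum_product by (simp add: sum.cartesian_product[symmetric])
  also have "\<dots> = (\<Sum>(k,ks)\<in>K \<times> tensor_basis K m. \<Prod>t<Suc m. h t ((k#ks)!t))"
    by (intro sum.cong refl) (auto simp: prod.lessThan_Suc_shift simp del: prod.lessThan_Suc)
  also have "\<dots> = (\<Sum>ks\<in>tensor_basis K (Suc m). \<Prod>t<Suc m. h t (ks!t))"
    unfolding tb_Suc by (subst sum.reindex) (auto simp: inj_on_def case_prod_beta)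
  finally show ?case .
qed


lemma tpow_decomp:
  fixes \<alpha> \<beta> :: "'k \<Rightarrow> 'a \<Rightarrow> complex"
  assumes "finite K" "\<forall>a\<in>S. \<forall>b\<in>S. \<tau> a b = (\<Sum>k\<in>K. \<alpha> k a * cnj (\<beta> k b))"
    and "xs \<in> tensor_basis S m" "ys \<in> tensor_basis S m"
  shows "tpow m \<tau> xs ys = (\<Sum>ks\<in>tensor_basis K m.
            (\<Prod>t<m. \<alpha> (ks!t) (xs!t)) * cnj (\<Prod>t<m. \<beta> (ks!t) (ys!t)))"
proof -
  have "tpow m \<tau> xs ys = (\<Prod>t<m. \<Sum>k\<in>K. \<alpha> k (xs!t) * cnj (\<beta> k (ys!t)))"
    unfolding tpow_def using assms(2-4) by (intro prod.cong refl) (simp add: tb_nth)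
  also have "\<dots> = (\<Sum>ks\<in>tensor_basis K m. \<Prod>t<m. \<alpha> (ks!t) (xs!t) * cnj (\<beta> (ks!t) (ys!t)))"
    by (rule prod_sum_lists[OF assms(1)])
  also have "\<dots> = (\<Sum>ks\<in>tensor_basis K m.
            (\<Prod>t<m. \<alpha> (ks!t) (xs!t)) * cnj (\<Prod>t<m. \<beta> (ks!t) (ys!t)))"
    by (simp add: prod.distrib cnj_prod)
  finally show ?thesis .
qed

lemma tr_tpow_form:
  fixes \<alpha> \<beta> :: "'k \<Rightarrow> 'a \<Rightarrow> complex"
  assumes "finite S" "finite K" "\<forall>a\<in>S. \<forall>b\<in>S. \<tau> a b = (\<Sum>k\<in>K. \<alpha> k a * cnj (\<beta> k b))"
  shows "tr (tensor_basis S m) (mmult (tensor_basis S m) E (tpow m \<tau>)) =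
    (\<Sum>ks\<in>tensor_basis K m. form (tensor_basis S m) E
        (\<lambda>xs. \<Prod>t<m. \<beta> (ks!t) (xs!t)) (\<lambda>xs. \<Prod>t<m. \<alpha> (ks!t) (xs!t)))"
proof -
  define T where "T = tensor_basis S m"
  define LK where "LK = tensor_basis K m"
  define Av where "Av = (\<lambda>ks xs. \<Prod>t<m. \<alpha> (ks!t) (xs!t))"
  define Bv where "Bv = (\<lambda>ks xs. \<Prod>t<m. \<beta> (ks!t) (xs!t))"
  have "tr T (mmult T E (tpow m \<tau>)) = (\<Sum>x\<in>T. \<Sum>z\<in>T. E x z * tpow m \<tau> z x)"
    by (simp add: tr_def mmult_def)
  also have "\<dots> = (\<Sum>x\<in>T. \<Sum>z\<in>T. E x z * (\<Sum>ks\<in>LK. Av ks z * cnj (Bv ks x)))"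
    unfolding T_def LK_def Av_def Bv_def using tpow_decomp[OF assms(2,3)]
    by (intro sum.cong refl) simp
  also have "\<dots> = (\<Sum>x\<in>T. \<Sum>z\<in>T. \<Sum>ks\<in>LK. cnj (Bv ks x) * E x z * Av ks z)"
    by (simp add: sum_distrib_left mult_ac)
  also have "\<dots> = (\<Sum>x\<in>T. \<Sum>ks\<in>LK. \<Sum>z\<in>T. cnj (Bv ks x) * E x z * Av ks z)"
    by (intro sum.cong refl) (rule sum.swap)
  also have "\<dots> = (\<Sum>ks\<in>LK. \<Sum>x\<in>T. \<Sum>z\<in>T. cnj (Bv ks x) * E x z * Av ks z)"
    by (rule sum.swap)
  also have "\<dots> = (\<Sum>ks\<in>LK. form T E (Bv ks) (Av ks))"
    by (simp add: form_def)
  finally show ?thesis unfolding T_def LK_def Av_def Bv_def .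
qed

lemma tr_tpow:
  assumes "finite S"
  shows "tr (tensor_basis S m) (tpow m \<sigma>) = (tr S \<sigma>) ^ m"
proof -
  have "(tr S \<sigma>) ^ m = (\<Prod>t<m. \<Sum>a\<in>S. \<sigma> a a)" by (simp add: tr_def)
  also have "\<dots> = (\<Sum>xs\<in>tensor_basis S m. \<Prod>t<m. \<sigma> (xs!t) (xs!t))"
    by (rule prod_sum_lists[OF assms])
  finally show ?thesis by (simp add: tr_def tpow_def)
qed



definition fl :: "(nat \<Rightarrow> bool) \<Rightarrow> nat \<times> bool \<Rightarrow> nat \<times> bool" where
  "fl x a = (fst a, snd a \<noteq> x (fst a))"

definition Xj :: "nat \<Rightarrow> nat \<times> bool \<Rightarrow> nat \<times> bool" where
  "Xj j a = (fst a, if fst a = j then \<not> snd a else snd a)"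

definition Pq :: "nat \<Rightarrow> (nat \<Rightarrow> real) \<Rightarrow> (nat \<Rightarrow> bool) \<Rightarrow> real" where
  "Pq N q x = (\<Prod>i\<in>{1..N}. if x i then q i else 1 - q i)"

definition Rq :: "nat \<Rightarrow> (nat \<Rightarrow> real) \<Rightarrow> nat \<Rightarrow> (nat \<Rightarrow> bool) \<Rightarrow> real" where
  "Rq N q j x = (\<Prod>i\<in>{1..N}-{j}. if x i then q i else 1 - q i)"

definition B0 :: "nat \<Rightarrow> nat \<Rightarrow> (nat \<Rightarrow> bool) set" where
  "B0 N j = {x\<in>bitstrings N. \<not> x j}"

lemma finite_basisAR: "finite (basisAR N)"
  by (simp add: basisAR_def)

lemma fl_in: "a \<in> basisAR N \<Longrightarrow> fl x a \<in> basisAR N"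
  by (auto simp: basisAR_def fl_def)

lemma Xj_in: "a \<in> basisAR N \<Longrightarrow> Xj j a \<in> basisAR N"
  by (auto simp: basisAR_def Xj_def)

lemma Omat_eq: "Omat x a z = (if z = fl x a then 1 else 0)"
proof -
  obtain i c where a: "a = (i, c)" by (cases a)
  obtain i' c' where z: "z = (i', c')" by (cases z)
  have "(i = i' \<and> c = (c' \<noteq> x i')) = ((i', c') = (i, c \<noteq> x i))" by auto
  then show ?thesis unfolding a z Omat_def fl_def by simp
qed

lemma conj_O:
  assumes "a \<in> basisAR N" "b \<in> basisAR N"
  shows "mmult (basisAR N) (mmult (basisAR N) (Omat x) \<rho>) (adj (Omat x)) a b = \<rho> (fl x a) (fl x b)"
proof -
  have 1: "mmult (basisAR N) (Omat x) \<rho> a w = \<rho> (fl x a) w" for w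
  proof -
    have "mmult (basisAR N) (Omat x) \<rho> a w = (\<Sum>z\<in>basisAR N. if z = fl x a then \<rho> z w else 0)"
      unfolding mmult_def Omat_eq by (intro sum.cong refl) simp
    also have "\<dots> = \<rho> (fl x a) w" using fl_in[OF assms(1)] finite_basisAR by (simp add: sum.delta)
    finally show ?thesis .
  qed
  have "mmult (basisAR N) (mmult (basisAR N) (Omat x) \<rho>) (adj (Omat x)) a b =
      (\<Sum>w\<in>basisAR N. if w = fl x b then \<rho> (fl x a) w else 0)"
    unfolding mmult_def[of _ "mmult _ _ _"] adj_def Omat_eq 1 by (intro sum.cong refl) simp
  also have "\<dots> = \<rho> (fl x a) (fl x b)" using fl_in[OF assms(2)] finite_basisAR by (simp add: sum.delta)
  finally show ?thesis .
qed

lemma chan_eq: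
  assumes "a \<in> basisAR N" "b \<in> basisAR N"
  shows "chan N q \<rho> a b = (\<Sum>x\<in>bitstrings N. of_real (Pq N q x) * \<rho> (fl x a) (fl x b))"
  unfolding chan_def Pq_def using conj_O[OF assms] by simp

lemma bits_split:
  assumes "j \<in> {1..N}"
  shows "(\<Sum>x\<in>bitstrings N. f x) = (\<Sum>x\<in>B0 N j. f x + f (x(j:=True)))"
proof -
  have fin: "finite (bitstrings N)" by (simp add: bitstrings_def finite_PiE)
  have "bitstrings N = B0 N j \<union> (\<lambda>x. x(j:=True)) ` B0 N j"
  proof (intro equalityI subsetI)
    fix x assume x: "x \<in> bitstrings N"
    show "x \<in> B0 N j \<union> (\<lambda>x. x(j:=True)) ` B0 N j"
    proof (cases "x j")
      case True
      have "x(j:=False) \<in> B0 N j" using x assms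
        by (auto simp: B0_def bitstrings_def PiE_def extensional_def)
      moreover have "x = (x(j:=False))(j:=True)" using True by (intro ext) auto
      ultimately show ?thesis by blast
    qed (use x in \<open>auto simp: B0_def\<close>)
  next
    fix x assume "x \<in> B0 N j \<union> (\<lambda>x. x(j:=True)) ` B0 N j"
    then show "x \<in> bitstrings N" using assms
      by (auto simp: B0_def bitstrings_def PiE_def extensional_def)
  qed
  moreover have "B0 N j \<inter> (\<lambda>x. x(j:=True)) ` B0 N j = {}" by (auto simp: B0_def)
  moreover have "finite (B0 N j)" using fin by (simp add: B0_def)
  moreover have "inj_on (\<lambda>x. x(j:=True)) (B0 N j)"
  proof (rule inj_onI)
    fix x y assume "x \<in> B0 N j" "y \<in> B0 N j" "x(j:=True) = y(j:=True)"
    then show "x = y" unfolding B0_def by (intro ext) (metis fun_upd_apply mem_Collect_eq)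
  qed
  ultimately show ?thesis
    by (simp add: sum.union_disjoint sum.reindex sum.distrib)
qed

lemma Pq_split:
  assumes "j \<in> {1..N}" "\<not> x j"
  shows "Pq N q x = Rq N q j x * (1 - q j)" "Pq N q (x(j:=True)) = Rq N q j x * q j"
proof -
  have "Pq N q x = (if x j then q j else 1 - q j) * (\<Prod>i\<in>{1..N}-{j}. if x i then q i else 1 - q i)"
    unfolding Pq_def using assms(1) by (subst prod.remove[of _ j]) auto
  then show "Pq N q x = Rq N q j x * (1 - q j)" using assms by (simp add: Rq_def)
  have "Pq N q (x(j:=True)) = q j * (\<Prod>i\<in>{1..N}-{j}. if (x(j:=True)) i then q i else 1 - q i)"
    unfolding Pq_def using assms(1) by (subst prod.remove[of _ j]) auto
  also have "(\<Prod>i\<in>{1..N}-{j}. if (x(j:=True)) i then q i else 1 - q i) = Rq N q j x"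
    unfolding Rq_def by (intro prod.cong refl) auto
  finally have eq: "Pq N q (x(j:=True)) = q j * Rq N q j x" .
  show "Pq N q (x(j:=True)) = Rq N q j x * q j" by (subst eq) (rule mult.commute)
qed

lemma Pq_sum: "(\<Sum>x\<in>bitstrings N. Pq N q x) = 1"
proof -
  have "(\<Sum>x\<in>bitstrings N. Pq N q x) = (\<Prod>i\<in>{1..N}. \<Sum>b\<in>(UNIV::bool set). if b then q i else 1 - q i)"
    unfolding Pq_def bitstrings_def by (rule prod_sum_PiE[symmetric]) auto
  also have "\<dots> = 1" by (simp add: UNIV_bool)
  finally show ?thesis .
qed

lemma Rq_sum:
  assumes "j \<in> {1..N}"
  shows "(\<Sum>x\<in>B0 N j. Rq N q j x) = 1"
proof -
  have "1 = (\<Sum>x\<in>B0 N j. Pq N q x + Pq N q (x(j:=True)))"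
    using Pq_sum[of N q] bits_split[OF assms, of "Pq N q"] by simp
  also have "\<dots> = (\<Sum>x\<in>B0 N j. Rq N q j x)"
    using assms by (intro sum.cong refl) (auto simp: Pq_split B0_def algebra_simps)
  finally show ?thesis by simp
qed

lemma Rq_nonneg:
  assumes "\<forall>i\<in>{1..N}. 0 \<le> q i \<and> q i \<le> 1"
  shows "Rq N q j x \<ge> 0"
  unfolding Rq_def using assms by (intro prod_nonneg) auto

lemma fl_upd:
  assumes "\<not> x j"
  shows "fl (x(j:=True)) a = fl x (Xj j a)"
  using assms by (cases a) (auto simp: fl_def Xj_def)


definition fam :: "(nat \<times> bool \<Rightarrow> nat \<times> bool \<Rightarrow> complex) \<Rightarrow> nat \<Rightarrow> ((nat \<Rightarrow> bool) \<Rightarrow> real) \<Rightarrow> real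
   \<Rightarrow> (nat \<Rightarrow> bool) \<times> (nat \<times> bool) \<times> bool \<Rightarrow> nat \<times> bool \<Rightarrow> complex" where
  "fam V j R q = (\<lambda>(x, r, l) a. of_real (sqrt (R x)) *
     (if l then of_real (sqrt (q * (1 - q))) * (V r (fl x a) - V r (fl x (Xj j a)))
      else of_real (1 - q) * V r (fl x a) + of_real q * V r (fl x (Xj j a))))"

definition KK :: "nat \<Rightarrow> nat \<Rightarrow> ((nat \<Rightarrow> bool) \<times> (nat \<times> bool) \<times> bool) set" where
  "KK N j = B0 N j \<times> basisAR N \<times> UNIV"

lemma finite_KK: "finite (KK N j)"
  unfolding KK_def B0_def bitstrings_def using finite_basisAR by (simp add: finite_PiE)

lemma alg1:
  fixes A1 A2 B1 B2 sr ss qc :: complex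
  assumes "sr * sr = rr" "ss * ss = qc * (1 - qc)"
  shows "(sr * ((1 - qc) * A1 + qc * A2)) * (sr * ((1 - qc) * B1 + qc * B2)) +
         (sr * (ss * (A1 - A2))) * (sr * (ss * (B1 - B2))) =
         rr * ((1 - qc) * (A1 * B1) + qc * (A2 * B2))"
proof -
  have "(sr * ((1 - qc) * A1 + qc * A2)) * (sr * ((1 - qc) * B1 + qc * B2)) +
         (sr * (ss * (A1 - A2))) * (sr * (ss * (B1 - B2))) =
        (sr * sr) * (((1 - qc) * A1 + qc * A2) * ((1 - qc) * B1 + qc * B2) + (ss * ss) * ((A1 - A2) * (B1 - B2)))"
    by (simp add: algebra_simps)
  also have "\<dots> = rr * (((1 - qc) * A1 + qc * A2) * ((1 - qc) * B1 + qc * B2) + (qc * (1 - qc)) * ((A1 - A2) * (B1 - B2)))"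
    unfolding assms ..
  also have "\<dots> = rr * ((1 - qc) * (A1 * B1) + qc * (A2 * B2))"
    by (simp add: algebra_simps)
  finally show ?thesis .
qed

lemma chan_fam:
  assumes j: "j \<in> {1..N}" and q: "\<forall>i\<in>{1..N}. 0 \<le> q i \<and> q i \<le> 1"
    and V: "\<forall>x\<in>basisAR N. \<forall>y\<in>basisAR N. \<rho> x y = (\<Sum>r\<in>basisAR N. V r x * cnj (V r y))"
    and ab: "a \<in> basisAR N" "b \<in> basisAR N"
  shows "chan N q \<rho> a b = (\<Sum>k\<in>KK N j. fam V j (Rq N q j) (q j) k a * cnj (fam V j (Rq N q j) (q j) k b))"
proof -
  let ?S = "basisAR N"
  let ?R = "Rq N q j"
  have qj: "0 \<le> q j" "q j \<le> 1" using q j by auto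
  have "chan N q \<rho> a b = (\<Sum>x\<in>B0 N j. of_real (Pq N q x) * \<rho> (fl x a) (fl x b) +
       of_real (Pq N q (x(j:=True))) * \<rho> (fl (x(j:=True)) a) (fl (x(j:=True)) b))"
    unfolding chan_eq[OF ab] by (rule bits_split[OF j])
  also have "\<dots> = (\<Sum>x\<in>B0 N j. \<Sum>r\<in>?S. of_real (?R x) * (of_real (1 - q j) * (V r (fl x a) * cnj (V r (fl x b)))
        + of_real (q j) * (V r (fl x (Xj j a)) * cnj (V r (fl x (Xj j b))))))"
  proof (intro sum.cong refl)
    fix x assume x: "x \<in> B0 N j"
    then have nx: "\<not> x j" by (simp add: B0_def)
    have r1: "\<rho> (fl x a) (fl x b) = (\<Sum>r\<in>?S. V r (fl x a) * cnj (V r (fl x b)))"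
      using V fl_in ab by blast
    have r2: "\<rho> (fl x (Xj j a)) (fl x (Xj j b)) = (\<Sum>r\<in>?S. V r (fl x (Xj j a)) * cnj (V r (fl x (Xj j b))))"
      using V fl_in Xj_in ab by blast
    show "of_real (Pq N q x) * \<rho> (fl x a) (fl x b) +
       of_real (Pq N q (x(j:=True))) * \<rho> (fl (x(j:=True)) a) (fl (x(j:=True)) b) =
       (\<Sum>r\<in>?S. of_real (?R x) * (of_real (1 - q j) * (V r (fl x a) * cnj (V r (fl x b)))
        + of_real (q j) * (V r (fl x (Xj j a)) * cnj (V r (fl x (Xj j b))))))"
    proof -
      have L: "(\<Sum>r\<in>?S. c1 * (c2 * A r + c3 * B r)) = c1 * (c2 * sum A ?S + c3 * sum B ?S)"
        for c1 c2 c3 :: complex and A B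
        by (simp add: sum.distrib sum_distrib_left distrib_left)
      show ?thesis unfolding Pq_split(1)[where j=j and N=N and x=x and q=q, OF j nx]
        Pq_split(2)[where j=j and N=N and x=x and q=q, OF j nx]
        fl_upd[where x=x and j=j, OF nx] r1 r2 L
        by (simp add: algebra_simps)
    qed
  qed
  also have "\<dots> = (\<Sum>x\<in>B0 N j. \<Sum>r\<in>?S. \<Sum>l\<in>UNIV. fam V j ?R (q j) (x, r, l) a * cnj (fam V j ?R (q j) (x, r, l) b))"
  proof (intro sum.cong refl)
    fix x r
    have e1: "of_real (sqrt (?R x)) * of_real (sqrt (?R x)) = (of_real (?R x) :: complex)"
      using Rq_nonneg[OF q] by (simp flip: of_real_mult)
    have e2: "of_real (sqrt (q j * (1 - q j))) * of_real (sqrt (q j * (1 - q j))) = (of_real (q j) * (1 - of_real (q j)) :: complex)"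
      using qj by (simp flip: of_real_mult) (simp add: algebra_simps)
    show "of_real (?R x) * (of_real (1 - q j) * (V r (fl x a) * cnj (V r (fl x b)))
        + of_real (q j) * (V r (fl x (Xj j a)) * cnj (V r (fl x (Xj j b))))) =
        (\<Sum>l\<in>UNIV. fam V j ?R (q j) (x, r, l) a * cnj (fam V j ?R (q j) (x, r, l) b))"
      unfolding UNIV_bool fam_def
      using alg1[OF e1 e2, of "V r (fl x a)" "V r (fl x (Xj j a))" "cnj (V r (fl x b))" "cnj (V r (fl x (Xj j b)))"]
      by (simp add: add.commute)
  qed
  also have "\<dots> = (\<Sum>k\<in>KK N j. fam V j ?R (q j) k a * cnj (fam V j ?R (q j) k b))"
    unfolding KK_def by (simp add: sum.cartesian_product)
  finally show ?thesis .
qed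



lemma sum4:
  "(\<Sum>a\<in>S. c1 * A a + c2 * B a + c3 * C a + c4 * E a) =
   c1 * sum A S + c2 * sum B S + c3 * sum C S + c4 * sum E S"
  for c1 c2 c3 c4 :: complex
  by (simp add: sum.distrib sum_distrib_left)

lemma inner_X:
  fixes u :: "'a \<Rightarrow> complex" and qa qb sa sb :: real
  assumes "finite S" "\<forall>a\<in>S. X a \<in> S" "\<forall>a\<in>S. X (X a) = a"
  shows "(\<Sum>a\<in>S. ((1 - of_real qa) * u a + of_real qa * u (X a)) * cnj ((1 - of_real qb) * u a + of_real qb * u (X a))
            + of_real (sa * sb) * ((u a - u (X a)) * cnj (u a - u (X a))))
       = of_real (1 - (qa + qb - 2*qa*qb - 2*sa*sb)) * (\<Sum>a\<in>S. u a * cnj (u a))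
         + of_real (qa + qb - 2*qa*qb - 2*sa*sb) * (\<Sum>a\<in>S. u a * cnj (u (X a)))"
proof -
  have r1: "(\<Sum>a\<in>S. u (X a) * cnj (u (X a))) = (\<Sum>a\<in>S. u a * cnj (u a))"
    by (rule sum.reindex_bij_witness[of S X X]) (use assms in auto)
  have r2: "(\<Sum>a\<in>S. u (X a) * cnj (u a)) = (\<Sum>a\<in>S. u a * cnj (u (X a)))"
    by (rule sum.reindex_bij_witness[of S X X]) (use assms in auto)
  have "(\<Sum>a\<in>S. ((1 - of_real qa) * u a + of_real qa * u (X a)) * cnj ((1 - of_real qb) * u a + of_real qb * u (X a))
            + of_real (sa * sb) * ((u a - u (X a)) * cnj (u a - u (X a))))
      = (\<Sum>a\<in>S. of_real ((1-qa)*(1-qb) + sa*sb) * (u a * cnj (u a)) + of_real ((1-qa)*qb - sa*sb) * (u a * cnj (u (X a)))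
           + of_real (qa*(1-qb) - sa*sb) * (u (X a) * cnj (u a)) + of_real (qa*qb + sa*sb) * (u (X a) * cnj (u (X a))))"
    by (intro sum.cong refl) (simp add: algebra_simps)
  also have "\<dots> = of_real ((1-qa)*(1-qb) + sa*sb) * (\<Sum>a\<in>S. u a * cnj (u a))
      + of_real ((1-qa)*qb - sa*sb) * (\<Sum>a\<in>S. u a * cnj (u (X a)))
      + of_real (qa*(1-qb) - sa*sb) * (\<Sum>a\<in>S. u a * cnj (u (X a)))
      + of_real (qa*qb + sa*sb) * (\<Sum>a\<in>S. u a * cnj (u a))"
    by (simp only: sum4 r1 r2)
  also have "\<dots> = of_real (1 - (qa + qb - 2*qa*qb - 2*sa*sb)) * (\<Sum>a\<in>S. u a * cnj (u a))
         + of_real (qa + qb - 2*qa*qb - 2*sa*sb) * (\<Sum>a\<in>S. u a * cnj (u (X a)))"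
    by (simp add: algebra_simps)
  finally show ?thesis .
qed


lemma diff_X:
  fixes u :: "nat \<times> bool \<Rightarrow> complex"
  assumes "finite S" "(j,True) \<in> S" "(j,False) \<in> S"
  shows "(\<Sum>a\<in>S. u a * cnj (u a)) - (\<Sum>a\<in>S. u a * cnj (u (Xj j a)))
         = of_real ((cmod (u (j,True) - u (j,False)))\<^sup>2)"
proof -
  have "(\<Sum>a\<in>S. u a * cnj (u a)) - (\<Sum>a\<in>S. u a * cnj (u (Xj j a))) =
        (\<Sum>a\<in>S. u a * (cnj (u a) - cnj (u (Xj j a))))"
    by (simp add: sum_subtractf right_diff_distrib)
  also have "\<dots> = (\<Sum>a\<in>{(j,True),(j,False)}. u a * (cnj (u a) - cnj (u (Xj j a))))"
  proof (rule sum.mono_neutral_right[OF assms(1)])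
    show "{(j, True), (j, False)} \<subseteq> S" using assms by auto
    show "\<forall>i\<in>S - {(j, True), (j, False)}. u i * (cnj (u i) - cnj (u (Xj j i))) = 0"
    proof
      fix i assume "i \<in> S - {(j, True), (j, False)}"
      then have "fst i \<noteq> j" by (cases i) auto
      then have "Xj j i = i" by (simp add: Xj_def)
      then show "u i * (cnj (u i) - cnj (u (Xj j i))) = 0" by simp
    qed
  qed
  also have "\<dots> = (u (j,True) - u (j,False)) * cnj (u (j,True) - u (j,False))"
    by (simp add: Xj_def algebra_simps)
  also have "\<dots> = of_real ((cmod (u (j,True) - u (j,False)))\<^sup>2)"
    by (rule mult_cnj_norm)
  finally show ?thesis .
qed


definition c2 :: "real \<Rightarrow> real \<Rightarrow> real" where
  "c2 qa qb = qa + qb - 2*qa*qb - 2 * sqrt (qa * (1 - qa)) * sqrt (qb * (1 - qb))"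

definition DD :: "(nat \<times> bool \<Rightarrow> nat \<times> bool \<Rightarrow> complex) \<Rightarrow> nat \<Rightarrow> nat \<Rightarrow> real" where
  "DD V N j = (\<Sum>r\<in>basisAR N. (cmod (V r (j,True) - V r (j,False)))\<^sup>2)"

lemma fl_invol: "fl x (fl x a) = a"
  by (cases a) (auto simp: fl_def)

lemma sum_triple: "(\<Sum>k\<in>A \<times> B \<times> C. G k) = (\<Sum>x\<in>A. \<Sum>y\<in>B. \<Sum>z\<in>C. G (x,y,z))"
  by (simp add: sum.cartesian_product)

lemma Xj_invol: "Xj j (Xj j a) = a"
  by (cases a) (simp add: Xj_def)

lemma tr_tau:
  assumes j: "j \<in> {1..N}" and Rnn: "\<forall>x. R x \<ge> 0" and Rsum: "(\<Sum>x\<in>B0 N j. R x) = 1"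
    and V: "\<forall>x\<in>basisAR N. \<forall>y\<in>basisAR N. \<rho> x y = (\<Sum>r\<in>basisAR N. V r x * cnj (V r y))"
    and trr: "tr (basisAR N) \<rho> = 1"
  shows "tr (basisAR N) (\<lambda>a b. \<Sum>k\<in>KK N j. fam V j R qa k a * cnj (fam V j R qb k b))
          = of_real (1 - c2 qa qb * DD V N j)"
proof -
  let ?S = "basisAR N"
  define c where "c = c2 qa qb"
  define sa where "sa = sqrt (qa * (1 - qa))"
  define sb where "sb = sqrt (qb * (1 - qb))"
  have c_def': "c = qa + qb - 2*qa*qb - 2*sa*sb" unfolding c_def c2_def sa_def sb_def by simp
  have finS: "finite ?S" by (rule finite_basisAR)
  have jS: "(j,True) \<in> ?S" "(j,False) \<in> ?S" using j by (auto simp: basisAR_def)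
  have "tr ?S (\<lambda>a b. \<Sum>k\<in>KK N j. fam V j R qa k a * cnj (fam V j R qb k b))
      = (\<Sum>a\<in>?S. \<Sum>k\<in>KK N j. fam V j R qa k a * cnj (fam V j R qb k a))"
    by (simp add: tr_def)
  also have "\<dots> = (\<Sum>k\<in>KK N j. \<Sum>a\<in>?S. fam V j R qa k a * cnj (fam V j R qb k a))"
    by (rule sum.swap)
  also have "\<dots> = (\<Sum>x\<in>B0 N j. \<Sum>r\<in>?S. \<Sum>l\<in>UNIV. \<Sum>a\<in>?S. fam V j R qa (x,r,l) a * cnj (fam V j R qb (x,r,l) a))"
    unfolding KK_def by (rule sum_triple)
  also have "\<dots> = (\<Sum>x\<in>B0 N j. \<Sum>r\<in>?S. of_real (R x) *
       ((\<Sum>a\<in>?S. V r (fl x a) * cnj (V r (fl x a))) - of_real c * of_real ((cmod (V r (j,True) - V r (j,False)))\<^sup>2)))"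
  proof (intro sum.cong refl)
    fix x r assume x: "x \<in> B0 N j"
    then have nx: "\<not> x j" by (simp add: B0_def)
    define u where "u = (\<lambda>a. V r (fl x a))"
    have uX: "V r (fl x (Xj j a)) = u (Xj j a)" for a by (simp add: u_def)
    have ujT: "u (j,True) = V r (j,True)" "u (j,False) = V r (j,False)"
      using nx by (simp_all add: u_def fl_def)
    have e1: "of_real (sqrt (R x)) * of_real (sqrt (R x)) = (of_real (R x) :: complex)"
      using Rnn by (simp flip: of_real_mult)
    have "(\<Sum>l\<in>UNIV. \<Sum>a\<in>?S. fam V j R qa (x,r,l) a * cnj (fam V j R qb (x,r,l) a))
       = of_real (R x) * (\<Sum>a\<in>?S. ((1 - of_real qa) * u a + of_real qa * u (Xj j a)) * cnj ((1 - of_real qb) * u a + of_real qb * u (Xj j a))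
            + of_real (sa * sb) * ((u a - u (Xj j a)) * cnj (u a - u (Xj j a))))"
    proof -
      have "(\<Sum>l\<in>UNIV. \<Sum>a\<in>?S. fam V j R qa (x,r,l) a * cnj (fam V j R qb (x,r,l) a))
         = (\<Sum>a\<in>?S. (of_real (sqrt (R x)) * of_real (sqrt (R x))) *
              (((1 - of_real qa) * u a + of_real qa * u (Xj j a)) * cnj ((1 - of_real qb) * u a + of_real qb * u (Xj j a))
            + of_real (sa * sb) * ((u a - u (Xj j a)) * cnj (u a - u (Xj j a)))))"
        unfolding UNIV_bool fam_def sa_def sb_def
        by (simp add: sum.distrib[symmetric] u_def algebra_simps)
      also have "\<dots> = of_real (R x) * (\<Sum>a\<in>?S. ((1 - of_real qa) * u a + of_real qa * u (Xj j a)) * cnj ((1 - of_real qb) * u a + of_real qb * u (Xj j a))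
            + of_real (sa * sb) * ((u a - u (Xj j a)) * cnj (u a - u (Xj j a))))"
        unfolding e1 by (simp add: sum_distrib_left)
      finally show ?thesis .
    qed
    also have "\<dots> = of_real (R x) * (of_real (1 - c) * (\<Sum>a\<in>?S. u a * cnj (u a)) + of_real c * (\<Sum>a\<in>?S. u a * cnj (u (Xj j a))))"
      unfolding c_def' by (subst inner_X[OF finS]) (auto simp: Xj_in Xj_invol)
    also have "\<dots> = of_real (R x) * ((\<Sum>a\<in>?S. u a * cnj (u a)) - of_real c *
        ((\<Sum>a\<in>?S. u a * cnj (u a)) - (\<Sum>a\<in>?S. u a * cnj (u (Xj j a)))))"
      by (simp add: algebra_simps)
    also have "\<dots> = of_real (R x) * ((\<Sum>a\<in>?S. V r (fl x a) * cnj (V r (fl x a))) - of_real c * of_real ((cmod (V r (j,True) - V r (j,False)))\<^sup>2))"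
      unfolding diff_X[OF finS jS] ujT by (simp add: u_def)
    finally show "(\<Sum>l\<in>UNIV. \<Sum>a\<in>?S. fam V j R qa (x,r,l) a * cnj (fam V j R qb (x,r,l) a)) =
      of_real (R x) * ((\<Sum>a\<in>?S. V r (fl x a) * cnj (V r (fl x a))) - of_real c * of_real ((cmod (V r (j,True) - V r (j,False)))\<^sup>2))" .
  qed
  also have "\<dots> = (\<Sum>x\<in>B0 N j. of_real (R x) * (1 - of_real c * of_real (DD V N j)))"
  proof (intro sum.cong refl)
    fix x
    have "(\<Sum>r\<in>?S. \<Sum>a\<in>?S. V r (fl x a) * cnj (V r (fl x a))) = (\<Sum>a\<in>?S. \<Sum>r\<in>?S. V r (fl x a) * cnj (V r (fl x a)))"
      by (rule sum.swap)
    also have "\<dots> = (\<Sum>a\<in>?S. \<rho> (fl x a) (fl x a))"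
      using V fl_in by (intro sum.cong refl) auto
    also have "\<dots> = (\<Sum>a\<in>?S. \<rho> a a)"
      by (rule sum.reindex_bij_witness[of _ "fl x" "fl x"]) (auto simp: fl_invol fl_in)
    also have "\<dots> = 1" using trr by (simp add: tr_def)
    finally have one: "(\<Sum>r\<in>?S. \<Sum>a\<in>?S. V r (fl x a) * cnj (V r (fl x a))) = 1" .
    show "(\<Sum>r\<in>?S. of_real (R x) * ((\<Sum>a\<in>?S. V r (fl x a) * cnj (V r (fl x a))) - of_real c * of_real ((cmod (V r (j,True) - V r (j,False)))\<^sup>2)))
        = of_real (R x) * (1 - of_real c * of_real (DD V N j))"
      by (simp add: sum_distrib_left[symmetric] sum_subtractf one DD_def of_real_sum)
  qed
  also have "\<dots> = of_real (1 - c * DD V N j)"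
    using Rsum by (simp add: sum_distrib_right[symmetric] flip: of_real_sum)
  finally show ?thesis unfolding c_def .
qed



lemma fid_bound:
  fixes a b \<delta> :: real
  assumes "0 \<le> \<delta>" "\<delta> < 1/2" "1 - \<delta> \<le> a" "a \<le> 1" "0 \<le> b" "b \<le> \<delta>"
  shows "sqrt a * sqrt b + sqrt (1 - a) * sqrt (1 - b) \<le> 2 * sqrt (\<delta> * (1 - \<delta>))"
proof -
  define s1 where "s1 = sqrt a * sqrt b + sqrt (1 - a) * sqrt (1 - b)"
  define s2 where "s2 = sqrt a * sqrt (1 - b) - sqrt b * sqrt (1 - a)"
  have sq: "(sqrt a)\<^sup>2 = a" "(sqrt b)\<^sup>2 = b" "(sqrt (1-a))\<^sup>2 = 1 - a" "(sqrt (1-b))\<^sup>2 = 1 - b"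
    using assms by auto
  have id: "s1\<^sup>2 + s2\<^sup>2 = 1"
  proof -
    have g: "(A*B + C*Dd)\<^sup>2 + (A*Dd - B*C)\<^sup>2 = A\<^sup>2*B\<^sup>2 + C\<^sup>2*Dd\<^sup>2 + A\<^sup>2*Dd\<^sup>2 + B\<^sup>2*C\<^sup>2" for A B C Dd :: real
      by (simp add: power2_eq_square algebra_simps)
    have "s1\<^sup>2 + s2\<^sup>2 = (sqrt a)\<^sup>2 * (sqrt b)\<^sup>2 + (sqrt (1-a))\<^sup>2 * (sqrt (1-b))\<^sup>2
        + (sqrt a)\<^sup>2 * (sqrt (1-b))\<^sup>2 + (sqrt b)\<^sup>2 * (sqrt (1-a))\<^sup>2"
      unfolding s1_def s2_def by (rule g)
    also have "\<dots> = 1" unfolding sq by (simp add: algebra_simps)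
    finally show ?thesis .
  qed
  have m1: "sqrt a * sqrt (1 - b) \<ge> sqrt (1 - \<delta>) * sqrt (1 - \<delta>)"
    by (rule mult_mono) (use assms in auto)
  have m2: "sqrt b * sqrt (1 - a) \<le> sqrt \<delta> * sqrt \<delta>"
    by (rule mult_mono) (use assms in auto)
  have e1: "sqrt (1 - \<delta>) * sqrt (1 - \<delta>) = 1 - \<delta>" using assms by (intro real_sqrt_mult_self[THEN trans]) simp
  have e2: "sqrt \<delta> * sqrt \<delta> = \<delta>" using assms by (intro real_sqrt_mult_self[THEN trans]) simp
  have "s2 \<ge> 1 - 2 * \<delta>" using m1 m2 unfolding s2_def e1 e2 by linarith
  then have "s2\<^sup>2 \<ge> (1 - 2 * \<delta>)\<^sup>2" using assms by (intro power_mono) auto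
  moreover have dd: "0 \<le> \<delta> * (1 - \<delta>)" by (rule mult_nonneg_nonneg) (use assms in linarith)+
  moreover have "(2 * sqrt (\<delta> * (1 - \<delta>)))\<^sup>2 = 4 * (\<delta> * (1 - \<delta>))"
    using dd by (simp add: power_mult_distrib)
  moreover have "4 * (\<delta> * (1 - \<delta>)) = 4 * \<delta> - 4 * \<delta>\<^sup>2"
    by (simp add: power2_eq_square algebra_simps)
  moreover have "(1 - 2 * \<delta>)\<^sup>2 = 1 - 4 * \<delta> + 4 * \<delta>\<^sup>2"
    by (simp add: power2_eq_square algebra_simps)
  ultimately have "s1\<^sup>2 \<le> (2 * sqrt (\<delta> * (1 - \<delta>)))\<^sup>2"
    using id by linarith
  then have "s1 \<le> 2 * sqrt (\<delta> * (1 - \<delta>))"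
    by (rule power2_le_imp_le) (use dd in simp)
  then show ?thesis unfolding s1_def .
qed

lemma bil:
  fixes qa qb \<eta> :: real
  assumes "\<eta> \<le> qa" "qa \<le> 1 - \<eta>" "\<eta> \<le> qb" "qb \<le> 1 - \<eta>"
  shows "qa + qb - 2 * qa * qb \<ge> 2 * \<eta> * (1 - \<eta>)"
proof -
  have "(qa - \<eta>) * ((1 - \<eta>) - qb) \<ge> 0" using assms by simp
  moreover have "(qb - \<eta>) * ((1 - \<eta>) - qa) \<ge> 0" using assms by simp
  ultimately show ?thesis by (simp add: algebra_simps)
qed

lemma c2_bound:
  fixes qa qb \<eta> :: real
  assumes "0 < \<eta>" "\<eta> \<le> qa" "qa \<le> 1 - \<eta>" "\<eta> \<le> qb" "qb \<le> 1 - \<eta>"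
  shows "c2 qa qb \<ge> 0" "c2 qa qb * (2 * \<eta> * (1 - \<eta>)) \<le> (qa - qb)\<^sup>2"
proof -
  define X where "X = sqrt (qa * (1 - qb))"
  define Y where "Y = sqrt (qb * (1 - qa))"
  have n1: "0 \<le> qa * (1 - qb)" by (rule mult_nonneg_nonneg) (use assms in linarith)+
  have n2: "0 \<le> qb * (1 - qa)" by (rule mult_nonneg_nonneg) (use assms in linarith)+
  from n1 n2 have X2: "X\<^sup>2 = qa * (1 - qb)" and Y2: "Y\<^sup>2 = qb * (1 - qa)" unfolding X_def Y_def by simp_all
  have XY: "sqrt (qa * (1 - qa)) * sqrt (qb * (1 - qb)) = X * Y"
  proof -
    have e: "qa * (1 - qa) * (qb * (1 - qb)) = qa * (1 - qb) * (qb * (1 - qa))" by (simp add: algebra_simps)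
    have "sqrt (qa * (1 - qa)) * sqrt (qb * (1 - qb)) = sqrt (qa * (1 - qa) * (qb * (1 - qb)))"
      by (rule real_sqrt_mult[symmetric])
    also have "\<dots> = sqrt (qa * (1 - qb) * (qb * (1 - qa)))" by (subst e) (rule refl)
    also have "\<dots> = X * Y" unfolding X_def Y_def by (rule real_sqrt_mult)
    finally show ?thesis .
  qed
  have c0: "c2 qa qb = qa + qb - 2*qa*qb - 2*(sqrt (qa * (1 - qa)) * sqrt (qb * (1 - qb)))"
    unfolding c2_def by (simp only: mult.assoc)
  have c: "c2 qa qb = (X - Y)\<^sup>2"
    unfolding c0 XY by (simp add: power2_diff X2 Y2 algebra_simps)
  show "c2 qa qb \<ge> 0" unfolding c by simp
  have X0: "X \<ge> 0" "Y \<ge> 0" unfolding X_def Y_def using n1 n2 by auto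
  have h2: "(X + Y)\<^sup>2 \<ge> X\<^sup>2 + Y\<^sup>2" using X0 by (simp add: power2_sum)
  have h1: "X\<^sup>2 + Y\<^sup>2 \<ge> 2 * \<eta> * (1 - \<eta>)"
    unfolding X2 Y2 using bil[OF assms(2-5)] by (simp add: algebra_simps)
  have h: "(X + Y)\<^sup>2 \<ge> 2 * \<eta> * (1 - \<eta>)" using h1 h2 by linarith
  have "c2 qa qb * (2 * \<eta> * (1 - \<eta>)) \<le> (X - Y)\<^sup>2 * (X + Y)\<^sup>2"
    unfolding c by (rule mult_left_mono[OF h]) simp
  also have "\<dots> = (X\<^sup>2 - Y\<^sup>2)\<^sup>2" by (simp add: power2_eq_square algebra_simps)
  also have "\<dots> = (qa - qb)\<^sup>2" unfolding X2 Y2 by (simp add: algebra_simps)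
  finally show "c2 qa qb * (2 * \<eta> * (1 - \<eta>)) \<le> (qa - qb)\<^sup>2" .
qed

lemma c2_same:
  assumes "0 \<le> q" "q \<le> 1"
  shows "c2 q q = 0"
proof -
  define s where "s = sqrt (q * (1 - q))"
  have ss: "s * s = q * (1 - q)" unfolding s_def using assms by simp
  have "c2 q q = q + q - 2*q*q - 2*(s*s)" unfolding c2_def s_def by simp
  also have "\<dots> = 0" unfolding ss by (simp add: algebra_simps)
  finally show ?thesis .
qed

lemma power_step:
  fixes Ov F D :: real and m :: nat
  assumes "Ov ^ m \<le> F" "F < 1" "D \<ge> 0" "Ov = 1 - D" "F \<ge> 0"
  shows "real m * D \<ge> 1 - F"
proof (cases "Ov \<ge> 0")
  case True
  have "1 + real m * (Ov - 1) \<le> (1 + (Ov - 1)) ^ m"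
    by (rule Bernoulli_inequality) (use True in simp)
  then show ?thesis using assms by simp
next
  case False
  have "m \<noteq> 0" using assms by (intro notI) simp
  then have "real m \<ge> 1" by simp
  moreover have "D > 1" using False assms by simp
  ultimately have "real m * D \<ge> 1 * D" by (intro mult_right_mono) auto
  then show ?thesis using \<open>D > 1\<close> assms(5) by linarith
qed



lemma form_sum: "form T (\<lambda>x y. \<Sum>a\<in>I. M a x y) u w = (\<Sum>a\<in>I. form T (M a) u w)"
proof -
  have "form T (\<lambda>x y. \<Sum>a\<in>I. M a x y) u w = (\<Sum>x\<in>T. \<Sum>y\<in>T. \<Sum>a\<in>I. cnj (u x) * M a x y * w y)"
    unfolding form_def by (simp add: sum_distrib_left sum_distrib_right)
  also have "\<dots> = (\<Sum>x\<in>T. \<Sum>a\<in>I. \<Sum>y\<in>T. cnj (u x) * M a x y * w y)"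
    by (intro sum.cong refl) (rule sum.swap)
  also have "\<dots> = (\<Sum>a\<in>I. \<Sum>x\<in>T. \<Sum>y\<in>T. cnj (u x) * M a x y * w y)"
    by (rule sum.swap)
  finally show ?thesis by (simp add: form_def)
qed

lemma psd_sum:
  assumes "\<forall>a\<in>I. psd T (M a)"
  shows "psd T (\<lambda>x y. \<Sum>a\<in>I. M a x y)"
  unfolding psd_form form_sum using assms by (auto simp: psdD Im_sum Re_sum intro!: sum_nonneg)

lemma tr_mmult_sum:
  "tr T (mmult T (\<lambda>x y. \<Sum>a\<in>I. M a x y) Z) = (\<Sum>a\<in>I. tr T (mmult T (M a) Z))"
proof -
  have "tr T (mmult T (\<lambda>x y. \<Sum>a\<in>I. M a x y) Z) = (\<Sum>x\<in>T. \<Sum>z\<in>T. \<Sum>a\<in>I. M a x z * Z z x)"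
    unfolding tr_def mmult_def by (simp add: sum_distrib_right)
  also have "\<dots> = (\<Sum>x\<in>T. \<Sum>a\<in>I. \<Sum>z\<in>T. M a x z * Z z x)"
    by (intro sum.cong refl) (rule sum.swap)
  also have "\<dots> = (\<Sum>a\<in>I. \<Sum>x\<in>T. \<Sum>z\<in>T. M a x z * Z z x)"
    by (rule sum.swap)
  finally show ?thesis by (simp add: tr_def mmult_def)
qed

lemma povm_tr:
  fixes N :: nat
  assumes "povm T {1..N} M" "N \<ge> 1" "finite T"
  shows "tr T (mmult T (M 1) Z) + tr T (mmult T (\<lambda>x y. \<Sum>a\<in>{2..N}. M a x y) Z) = tr T Z"
proof -
  have I: "{1..N} = insert 1 {2..N}" using assms(2) by auto
  have "tr T (mmult T (M 1) Z) + tr T (mmult T (\<lambda>x y. \<Sum>a\<in>{2..N}. M a x y) Z)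
      = (\<Sum>a\<in>{1..N}. tr T (mmult T (M a) Z))"
    unfolding tr_mmult_sum I by simp
  also have "\<dots> = tr T (mmult T (\<lambda>x y. \<Sum>a\<in>{1..N}. M a x y) Z)"
    by (rule tr_mmult_sum[symmetric])
  also have "\<dots> = (\<Sum>x\<in>T. \<Sum>z\<in>T. (if x = z then 1 else 0) * Z z x)"
    unfolding tr_def mmult_def using assms(1) unfolding povm_def by (intro sum.cong refl) simp
  also have "\<dots> = (\<Sum>x\<in>T. \<Sum>z\<in>T. if x = z then Z z x else 0)"
    by (intro sum.cong refl) simp
  also have "\<dots> = tr T Z" unfolding tr_def using assms(3)
    by (simp add: sum.delta)
  finally show ?thesis .
qed

lemma cmod_diff_sq: "(cmod (z - w))\<^sup>2 \<le> 2 * (cmod z)\<^sup>2 + 2 * (cmod w)\<^sup>2"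
proof -
  have "cmod (z - w) \<le> cmod z + cmod w" by (rule norm_triangle_ineq4)
  then have "(cmod (z - w))\<^sup>2 \<le> (cmod z + cmod w)\<^sup>2" by (intro power_mono) auto
  also have "\<dots> \<le> 2 * (cmod z)\<^sup>2 + 2 * (cmod w)\<^sup>2"
    by (simp add: power2_sum) (smt (verit) sum_squares_bound)
  finally show ?thesis .
qed

theorem corollary2:
  fixes N m :: nat and \<eta> \<delta> :: real and p :: "nat \<Rightarrow> real"
    and \<rho> :: "(nat \<times> bool) op" and M :: "nat \<Rightarrow> (nat \<times> bool) list op"
  assumes "N \<ge> 2"
    and "0 < \<eta>" "\<eta> < 1/2" "0 \<le> \<delta>" "\<delta> < 1/2"
    and "p 0 > p 1" "p 1 > p 2" "\<forall>i. 2 \<le> i \<and> i < N \<longrightarrow> p i \<ge> p (Suc i)"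
    and "\<forall>i\<in>{0..N}. \<eta> \<le> p i \<and> p i \<le> 1 - \<eta>"
    and "p 0 - p 1 = p 1 - p 2"
    and "density (basisAR N) \<rho>"
    and "povm (tensor_basis (basisAR N) m) {1..N} M"
    and "\<forall>k\<in>{0..N}.
           Re (tr (tensor_basis (basisAR N) m)
                 (mmult (tensor_basis (basisAR N) m)
                    (M (if k = 0 then 1 else k))
                    (tpow m (chan N (pvec p k) \<rho>)))) \<ge> 1 - \<delta>"
  shows "real m \<ge> \<eta> * (1 - \<eta>) * (1 - 2 * sqrt (\<delta> * (1 - \<delta>))) / 16 * hardness N (pvec p 0)"
proof -
  let ?S = "basisAR N"
  define T where "T = tensor_basis ?S m"
  have finS: "finite ?S" by (rule finite_basisAR)
  have finT: "finite T" unfolding T_def by (rule finite_tb[OF finS])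
  have N1: "N \<ge> 1" using assms(1) by simp
  have psdr: "psd ?S \<rho>" and trr: "tr ?S \<rho> = 1" using assms(11) by (auto simp: density_def)
  obtain V where V: "\<forall>x\<in>?S. \<forall>y\<in>?S. \<rho> x y = (\<Sum>r\<in>?S. V r x * cnj (V r y))"
    using psd_decomp[OF finS psdr] by blast
  have pb: "\<eta> \<le> p i \<and> p i \<le> 1 - \<eta>" if "i \<le> N" for i using assms(9) that by auto
  have p01: "0 \<le> p i \<and> p i \<le> 1" if "i \<le> N" for i using pb[OF that] assms(2,3) by linarith
  have pv0: "pvec p 0 = p" by (rule ext) (simp add: pvec_def)
  have pmono: "p j \<le> p 2" if "2 \<le> j" "j \<le> N" for j
    using that
  proof (induction j rule: dec_induct)
    case base then show ?case by simp
  next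
    case (step k)
    then have "p (Suc k) \<le> p k" using assms(8) by simp
    then show ?case using step by simp
  qed
  define F where "F = 2 * sqrt (\<delta> * (1 - \<delta>))"
  have dd: "0 \<le> \<delta> * (1 - \<delta>)" using assms(4,5) by (intro mult_nonneg_nonneg) auto
  have F0: "F \<ge> 0" unfolding F_def using dd by simp
  have F1: "F < 1"
  proof -
    have "\<delta> * (1 - \<delta>) < 1/4"
    proof -
      have "0 < (1 - 2 * \<delta>)\<^sup>2" using assms(5) by simp
      then show ?thesis by (simp add: power2_eq_square algebra_simps)
    qed
    then have "sqrt (\<delta> * (1 - \<delta>)) < sqrt (1/4)" by (rule real_sqrt_less_mono)
    also have "sqrt (1/4) = (1/2::real)" by (simp add: real_sqrt_divide)
    finally show ?thesis unfolding F_def by simp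
  qed
  define E1 where "E1 = M 1"
  define E' where "E' = (\<lambda>x y. \<Sum>a\<in>{2..N}. M a x y)"
  have povm: "povm T {1..N} M" using assms(12) unfolding T_def .
  have psdM: "psd T (M a)" if "a \<in> {1..N}" for a using povm that unfolding povm_def by blast
  have psdE1: "psd T E1" unfolding E1_def using psdM N1 by simp
  have psdE': "psd T E'" unfolding E'_def by (rule psd_sum) (use psdM in auto)
  have split: "tr T (mmult T E1 Z) + tr T (mmult T E' Z) = tr T Z" for Z
    unfolding E1_def E'_def by (rule povm_tr[OF povm N1 finT])
  define W where "W = (\<lambda>j. Re (\<rho> (j,True) (j,True)) + Re (\<rho> (j,False) (j,False)))"
  have rdiag: "Re (\<rho> a a) = (\<Sum>r\<in>?S. (cmod (V r a))\<^sup>2)" if "a \<in> ?S" for a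
  proof -
    have "\<rho> a a = (\<Sum>r\<in>?S. of_real ((cmod (V r a))\<^sup>2))" using V that by (simp add: mult_cnj_norm)
    then show ?thesis by (simp only: Re_sum Re_complex_of_real)
  qed
  have W0: "W j \<ge> 0" if "j \<in> {1..N}" for j
    using psd_diag(2)[OF psdr finS, of "(j,True)"] psd_diag(2)[OF psdr finS, of "(j,False)"] that
    by (simp add: W_def basisAR_def)
  have Wsum: "(\<Sum>j\<in>{1..N}. W j) = 1"
  proof -
    have "(\<Sum>j\<in>{1..N}. W j) = (\<Sum>j\<in>{1..N}. \<Sum>c\<in>(UNIV::bool set). Re (\<rho> (j,c) (j,c)))"
      by (simp add: W_def UNIV_bool add.commute)
    also have "\<dots> = (\<Sum>a\<in>{1..N} \<times> (UNIV::bool set). Re (\<rho> a a))"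
      by (simp add: sum.cartesian_product)
    also have "\<dots> = Re (\<Sum>a\<in>{1..N} \<times> (UNIV::bool set). \<rho> a a)"
      by (simp add: Re_sum)
    also have "\<dots> = 1" using trr by (simp add: tr_def basisAR_def)
    finally show ?thesis .
  qed
  have key: "\<eta> * (1 - \<eta>) * (1 - F) \<le> real m * W j * (p 0 - p j)\<^sup>2" if j: "j \<in> {2..N}" for j
  proof -
    have j1: "j \<in> {1..N}" using j by simp
    define R where "R = Rq N p j"
    have Rpv: "Rq N (pvec p j) j = R"
      unfolding R_def Rq_def by (intro ext prod.cong refl) (auto simp: pvec_def)
    have pvj: "pvec p j j = p 0" using j by (simp add: pvec_def)
    have q0: "\<forall>i\<in>{1..N}. 0 \<le> p i \<and> p i \<le> 1" using p01 by auto
    have qj: "\<forall>i\<in>{1..N}. 0 \<le> pvec p j i \<and> pvec p j i \<le> 1" using p01 by (auto simp: pvec_def)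
    define \<alpha> where "\<alpha> = fam V j R (p j)"
    define \<beta> where "\<beta> = fam V j R (p 0)"
    define \<sigma>0 where "\<sigma>0 = chan N (pvec p 0) \<rho>"
    define \<sigma>j where "\<sigma>j = chan N (pvec p j) \<rho>"
    define \<tau> where "\<tau> = (\<lambda>a b. \<Sum>k\<in>KK N j. \<alpha> k a * cnj (\<beta> k b))"
    have d0: "\<forall>a\<in>?S. \<forall>b\<in>?S. \<sigma>0 a b = (\<Sum>k\<in>KK N j. \<alpha> k a * cnj (\<alpha> k b))"
      unfolding \<sigma>0_def pv0 \<alpha>_def R_def using chan_fam[OF j1 q0 V] by blast
    have dj: "\<forall>a\<in>?S. \<forall>b\<in>?S. \<sigma>j a b = (\<Sum>k\<in>KK N j. \<beta> k a * cnj (\<beta> k b))"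
      unfolding \<sigma>j_def \<beta>_def using chan_fam[OF j1 qj V] unfolding Rpv pvj by blast
    have dt: "\<forall>a\<in>?S. \<forall>b\<in>?S. \<tau> a b = (\<Sum>k\<in>KK N j. \<alpha> k a * cnj (\<beta> k b))"
      unfolding \<tau>_def by blast
    define L where "L = tensor_basis (KK N j) m"
    define A where "A = (\<lambda>ks xs. \<Prod>t<m. \<alpha> (ks!t) (xs!t))"
    define B where "B = (\<lambda>ks xs. \<Prod>t<m. \<beta> (ks!t) (xs!t))"
    have tr0: "tr T (mmult T E (tpow m \<sigma>0)) = (\<Sum>ks\<in>L. form T E (A ks) (A ks))" for E
      unfolding T_def L_def A_def by (rule tr_tpow_form[OF finS finite_KK d0])
    have trj: "tr T (mmult T E (tpow m \<sigma>j)) = (\<Sum>ks\<in>L. form T E (B ks) (B ks))" for E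
      unfolding T_def L_def B_def by (rule tr_tpow_form[OF finS finite_KK dj])
    have trt: "tr T (mmult T E (tpow m \<tau>)) = (\<Sum>ks\<in>L. form T E (B ks) (A ks))" for E
      unfolding T_def L_def A_def B_def by (rule tr_tpow_form[OF finS finite_KK dt])
    have Rnn: "\<forall>x. R x \<ge> 0" unfolding R_def using Rq_nonneg[OF q0] by blast
    have Rs: "(\<Sum>x\<in>B0 N j. R x) = 1" unfolding R_def by (rule Rq_sum[OF j1])
    have trS: "tr ?S \<sigma> = tr ?S (\<lambda>a b. \<Sum>k\<in>KK N j. \<gamma> k a * cnj (\<gamma>' k b))"
      if "\<forall>a\<in>?S. \<forall>b\<in>?S. \<sigma> a b = (\<Sum>k\<in>KK N j. \<gamma> k a * cnj (\<gamma>' k b))" for \<sigma> \<gamma> \<gamma>'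
      unfolding tr_def using that by (intro sum.cong refl) simp
    have pj01: "0 \<le> p j" "p j \<le> 1" "0 \<le> p 0" "p 0 \<le> 1" using p01[of j] p01[of 0] j by auto
    have t0: "tr T (tpow m \<sigma>0) = 1"
      unfolding T_def tr_tpow[OF finS] trS[OF d0] \<alpha>_def
      using tr_tau[OF j1 Rnn Rs V trr, of "p j" "p j"] c2_same[OF pj01(1,2)] by simp
    have tj: "tr T (tpow m \<sigma>j) = 1"
      unfolding T_def tr_tpow[OF finS] trS[OF dj] \<beta>_def
      using tr_tau[OF j1 Rnn Rs V trr, of "p 0" "p 0"] c2_same[OF pj01(3,4)] by simp
    define c where "c = c2 (p j) (p 0)"
    define D where "D = DD V N j"
    have tt: "tr T (tpow m \<tau>) = of_real ((1 - c * D) ^ m)"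
      unfolding T_def tr_tpow[OF finS] \<tau>_def \<alpha>_def \<beta>_def c_def D_def
      using tr_tau[OF j1 Rnn Rs V trr, of "p j" "p 0"] by simp
    have nn: "Re (tr T (mmult T E (tpow m \<sigma>)) ) \<ge> 0"
      if "psd T E" "\<sigma> = \<sigma>0 \<or> \<sigma> = \<sigma>j" for E \<sigma>
    proof -
      have "Re (\<Sum>ks\<in>L. form T E (A ks) (A ks)) \<ge> 0" "Re (\<Sum>ks\<in>L. form T E (B ks) (B ks)) \<ge> 0"
        using psdD(2)[OF that(1)] by (simp_all add: Re_sum sum_nonneg)
      then show ?thesis using that(2) tr0 trj by auto
    qed
    define a0 where "a0 = Re (tr T (mmult T E1 (tpow m \<sigma>0)))"
    define b0 where "b0 = Re (tr T (mmult T E1 (tpow m \<sigma>j)))"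
    have a0': "Re (tr T (mmult T E' (tpow m \<sigma>0))) = 1 - a0"
      using arg_cong[OF split[of "tpow m \<sigma>0"], of Re] t0 unfolding a0_def by simp
    have b0': "Re (tr T (mmult T E' (tpow m \<sigma>j))) = 1 - b0"
      using arg_cong[OF split[of "tpow m \<sigma>j"], of Re] tj unfolding b0_def by simp
    have a0ge: "a0 \<ge> 1 - \<delta>" using bspec[OF assms(13), of 0] unfolding a0_def E1_def T_def \<sigma>0_def by simp
    have a0le: "a0 \<le> 1" using nn[OF psdE', of \<sigma>0] a0' by simp
    have b0ge: "b0 \<ge> 0" unfolding b0_def using nn[OF psdE1, of \<sigma>j] by simp
    have b0le: "b0 \<le> \<delta>"
    proof -
      have "Re (tr T (mmult T (M j) (tpow m \<sigma>j))) \<ge> 1 - \<delta>"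
        using bspec[OF assms(13), of j] j unfolding T_def \<sigma>j_def by simp
      moreover have "Re (tr T (mmult T (M j) (tpow m \<sigma>j))) \<le> Re (tr T (mmult T E' (tpow m \<sigma>j)))"
      proof -
        have "Re (tr T (mmult T E' (tpow m \<sigma>j))) = (\<Sum>a\<in>{2..N}. Re (tr T (mmult T (M a) (tpow m \<sigma>j))))"
          unfolding E'_def tr_mmult_sum by (simp add: Re_sum)
        moreover have "Re (tr T (mmult T (M j) (tpow m \<sigma>j))) \<le> (\<Sum>a\<in>{2..N}. Re (tr T (mmult T (M a) (tpow m \<sigma>j))))"
        proof -
          have "\<forall>a\<in>{2..N}-{j}. 0 \<le> Re (tr T (mmult T (M a) (tpow m \<sigma>j)))"
            using nn psdM by auto
          then show ?thesis by (intro member_le_sum j) auto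
        qed
        ultimately show ?thesis by simp
      qed
      ultimately show ?thesis using b0' by simp
    qed
    have cs1: "Re (tr T (mmult T E1 (tpow m \<tau>))) \<le> sqrt a0 * sqrt b0"
      unfolding trt a0_def b0_def tr0 trj by (rule form_cs[OF psdE1 finT])
    have cs2: "Re (tr T (mmult T E' (tpow m \<tau>))) \<le> sqrt (1 - a0) * sqrt (1 - b0)"
      unfolding a0'[symmetric] b0'[symmetric] trt tr0 trj by (rule form_cs[OF psdE' finT])
    have "(1 - c * D) ^ m = Re (tr T (mmult T E1 (tpow m \<tau>))) + Re (tr T (mmult T E' (tpow m \<tau>)))"
      using arg_cong[OF split[of "tpow m \<tau>"], of Re] tt by simp
    also have "\<dots> \<le> sqrt a0 * sqrt b0 + sqrt (1 - a0) * sqrt (1 - b0)" using cs1 cs2 by simp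
    also have "\<dots> \<le> F" unfolding F_def by (rule fid_bound) (use assms(4,5) a0ge a0le b0ge b0le in auto)
    finally have powF: "(1 - c * D) ^ m \<le> F" .
    have pjb: "\<eta> \<le> p j" "p j \<le> 1 - \<eta>" "\<eta> \<le> p 0" "p 0 \<le> 1 - \<eta>" using pb[of j] pb[of 0] j by auto
    have c0: "c \<ge> 0" and cb: "c * (2 * \<eta> * (1 - \<eta>)) \<le> (p j - p 0)\<^sup>2"
      unfolding c_def using c2_bound[OF assms(2) pjb] by auto
    have D0: "D \<ge> 0" unfolding D_def DD_def by (simp add: sum_nonneg)
    have DW: "D \<le> 2 * W j"
    proof -
      have "D \<le> (\<Sum>r\<in>?S. 2 * (cmod (V r (j,True)))\<^sup>2 + 2 * (cmod (V r (j,False)))\<^sup>2)"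
        unfolding D_def DD_def by (intro sum_mono cmod_diff_sq)
      also have "\<dots> = 2 * W j"
        using j1 unfolding W_def by (simp add: rdiag basisAR_def sum.distrib sum_distrib_left)
      finally show ?thesis .
    qed
    have "real m * (c * D) \<ge> 1 - F"
      by (rule power_step[OF powF F1]) (use c0 D0 F0 in simp_all)
    moreover have "real m * (c * D) \<le> real m * (c * (2 * W j))"
      by (intro mult_left_mono) (use DW c0 in auto)
    ultimately have h: "1 - F \<le> real m * (c * (2 * W j))" by linarith
    have e0: "\<eta> * (1 - \<eta>) \<ge> 0" using assms(2,3) by simp
    have "(1 - F) * (\<eta> * (1 - \<eta>)) \<le> real m * (c * (2 * W j)) * (\<eta> * (1 - \<eta>))"
      by (rule mult_right_mono[OF h e0])
    also have "\<dots> = real m * (2 * W j) * (c * (\<eta> * (1 - \<eta>)))" by (simp add: mult_ac)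
    finally have "(1 - F) * (\<eta> * (1 - \<eta>)) \<le> real m * (2 * W j) * (c * (\<eta> * (1 - \<eta>)))" .
    also have "\<dots> \<le> real m * W j * (p 0 - p j)\<^sup>2"
    proof -
      have "real m * (2 * W j) * (c * (\<eta> * (1 - \<eta>))) = (real m * W j) * (c * (2 * \<eta> * (1 - \<eta>)))"
        by (simp add: mult_ac)
      also have "\<dots> \<le> (real m * W j) * (p j - p 0)\<^sup>2"
        by (rule mult_left_mono[OF cb]) (use W0[OF j1] in simp)
      finally show ?thesis by (simp add: power2_commute)
    qed
    finally show ?thesis by (simp add: mult_ac)
  qed
  define K where "K = \<eta> * (1 - \<eta>) * (1 - F)"
  have K0: "K \<ge> 0" unfolding K_def using assms(2,3) F1 by simp
  have lt1: "p j < p 1" if "j \<in> {2..N}" for j using pmono[of j] that assms(7) by auto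
  have best: "best_arm N p = 1"
    unfolding best_arm_def
  proof (rule the_equality)
    show "1 \<in> {1..N} \<and> (\<forall>j\<in>{1..N}. j \<noteq> 1 \<longrightarrow> p j < p 1)"
      using N1 lt1 by auto
  next
    fix i assume i: "i \<in> {1..N} \<and> (\<forall>j\<in>{1..N}. j \<noteq> i \<longrightarrow> p j < p i)"
    show "i = 1"
    proof (rule ccontr)
      assume "i \<noteq> 1"
      then have "p 1 < p i" using i N1 by auto
      moreover have "p i < p 1" using lt1[of i] i \<open>i \<noteq> 1\<close> by auto
      ultimately show False by simp
    qed
  qed
  have H: "hardness N (pvec p 0) = (\<Sum>i\<in>{2..N}. 1 / (p 1 - p i)\<^sup>2)"
  proof -
    have "{1..N} - {1} = {2..N}" by auto
    then show ?thesis unfolding hardness_def pv0 best by simp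
  qed
  have each: "K / 4 * (1 / (p 1 - p j)\<^sup>2) \<le> real m * W j" if j: "j \<in> {2..N}" for j
  proof -
    define d1 where "d1 = p 1 - p j"
    define d0 where "d0 = p 0 - p j"
    have d1p: "d1 > 0" unfolding d1_def using lt1[OF j] by simp
    have "p 0 - p 1 \<le> p 1 - p j" using assms(10) pmono[of j] j by auto
    then have d0le: "d0 \<le> 2 * d1" unfolding d0_def d1_def by simp
    have d0p: "d0 > 0" unfolding d0_def using lt1[OF j] assms(6) by simp
    have sq: "d0\<^sup>2 \<le> 4 * d1\<^sup>2"
    proof -
      have "d0\<^sup>2 \<le> (2 * d1)\<^sup>2" using d0le d0p by (intro power_mono) auto
      then show ?thesis by (simp add: power_mult_distrib)
    qed
    have k: "K \<le> real m * W j * d0\<^sup>2" using key[OF j] unfolding K_def d0_def .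
    have "K / 4 * (1 / d1\<^sup>2) = K / (4 * d1\<^sup>2)" by simp
    also have "\<dots> \<le> K / d0\<^sup>2"
      by (rule divide_left_mono[OF sq K0]) (use d0p d1p in simp)
    also have "\<dots> \<le> real m * W j" using k d0p by (simp add: divide_le_eq)
    finally show ?thesis unfolding d1_def .
  qed
  have "K / 4 * hardness N (pvec p 0) = (\<Sum>j\<in>{2..N}. K / 4 * (1 / (p 1 - p j)\<^sup>2))"
    unfolding H by (simp add: sum_distrib_left)
  also have "\<dots> \<le> (\<Sum>j\<in>{2..N}. real m * W j)" by (rule sum_mono) (rule each)
  also have "\<dots> = real m * (\<Sum>j\<in>{2..N}. W j)" by (simp add: sum_distrib_left)
  also have "\<dots> \<le> real m * (\<Sum>j\<in>{1..N}. W j)"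
    by (intro mult_left_mono sum_mono2) (use W0 in auto)
  also have "\<dots> = real m" using Wsum by simp
  finally have fin: "K / 4 * hardness N (pvec p 0) \<le> real m" .
  have H0: "hardness N (pvec p 0) \<ge> 0" unfolding H by (simp add: sum_nonneg)
  have "K / 16 * hardness N (pvec p 0) \<le> K / 4 * hardness N (pvec p 0)"
    by (intro mult_right_mono) (use K0 H0 in auto)
  then show ?thesis using fin unfolding K_def F_def by linarith
qed

end
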